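(* Let $K,L,T$ be positive integers with $L\le K$, let $\varphi=T-1-KL+2K$, and for $r\in\{1,\ldots,\min\{K,T\}\}$ let $N(r)$ be the number of distinct integers in $\operatorname{Set}(\alpha)+\operatorname{Set}(\beta)$ for the $\mathsf{GASP}_r$ vectors $(\alpha,\beta)$. Suppose $\varphi\ge1$. Then for every integer $r$ with $1\le r\le\min\{K,T,\varphi\}$ we have $N(\min\{K,T,\varphi\})\le N(r)$.
   Context: The code $\mathsf{GASP}_r$ ($L\le K$, $1\le r\le\min\{K,T\}$) consists of $\alpha=(\alpha_{\mathrm p}\mid\alpha_{\mathrm s})$, $\beta=(\beta_{\mathrm p}\mid\beta_{\mathrm s})$ with $\alpha_{\mathrm p}=(0,1,\ldots,K-1)$; $\alpha_{\mathrm s}$ the $T$ smallest elements of $\{KL+j+Kt: 0\le j\le r-1,\ t\in\mathbb{Z}_{\ge0}\}$ in increasing order; $\beta_{\mathrm p}=(0,K,\ldots,K(L-1))$; $\beta_{\mathrm s}=(KL,\ldots,KL+T-1)$. $\operatorname{Set}(v)$ is the set of entries of $v$, $A+B=\{a+b\}$. *)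

theory Defs
  imports Main "HOL-Library.Infinite_Set"
begin

definition gasp_S :: "nat \<Rightarrow> nat \<Rightarrow> nat \<Rightarrow> nat set" where
  "gasp_S K L r = {K*L + j + K*t | j t. j < r}"

definition gasp_alpha_p :: "nat \<Rightarrow> nat list" where
  "gasp_alpha_p K = [0..<K]"

(* alpha_s = the T smallest elements of gasp_S in increasing order;
   enumerate S i is the i-th smallest element (0-based) of an infinite set S *)
definition gasp_alpha_s :: "nat \<Rightarrow> nat \<Rightarrow> nat \<Rightarrow> nat \<Rightarrow> nat list" where
  "gasp_alpha_s K L T r = map (enumerate (gasp_S K L r)) [0..<T]"

definition gasp_alpha :: "nat \<Rightarrow> nat \<Rightarrow> nat \<Rightarrow> nat \<Rightarrow> nat list" where
  "gasp_alpha K L T r = gasp_alpha_p K @ gasp_alpha_s K L T r"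

definition gasp_beta :: "nat \<Rightarrow> nat \<Rightarrow> nat \<Rightarrow> nat list" where
  "gasp_beta K L T = map (\<lambda>l. K*l) [0..<L] @ [K*L..<K*L+T]"

definition sumset :: "nat set \<Rightarrow> nat set \<Rightarrow> nat set" where
  "sumset A B = {a + b | a b. a \<in> A \<and> b \<in> B}"

definition gasp_N :: "nat \<Rightarrow> nat \<Rightarrow> nat \<Rightarrow> nat \<Rightarrow> nat" where
  "gasp_N K L T r = card (sumset (set (gasp_alpha K L T r)) (set (gasp_beta K L T)))"

end

theory Submission imports Defs begin

definition gg :: "nat \<Rightarrow> nat \<Rightarrow> nat \<Rightarrow> nat" where
  "gg K r i = i mod r + K * (i div r)"

lemma gg_step:
  assumes "0 < r" "r \<le> K"
  shows "gg K r i < gg K r (Suc i)"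
proof (cases "Suc i mod r = 0")
  case True
  then have m: "i mod r = r - 1"
    by (metis assms(1) mod_Suc Suc_pred' diff_Suc_1 nat.distinct(1))
  have d: "Suc i div r = Suc (i div r)"
  proof -
    have "Suc i = r * (i div r) + r" using m assms(1)
      by (metis Suc_pred' add_Suc_right div_mult_mod_eq mult.commute)
    then show ?thesis using assms(1)
      by (metis True add.commute div_mult_self2 div_self less_not_refl2 mult.commute mult_Suc_right mod_mult_self1_is_0 div_mult_self1_is_m)
  qed
  show ?thesis unfolding gg_def using m d True assms by simp
next
  case False
  then have m: "Suc i mod r = Suc (i mod r)"
    by (metis mod_Suc)
  have d: "Suc i div r = i div r"
    using False by (metis div_Suc)
  show ?thesis unfolding gg_def using m d by simp
qed

lemma gg_mono: "0 < r \<Longrightarrow> r \<le> K \<Longrightarrow> strict_mono (gg K r)"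
  by (simp add: strict_mono_Suc_iff gg_step)

lemma enum_range:
  fixes f :: "nat \<Rightarrow> nat"
  assumes f: "strict_mono f"
  shows "enumerate (range f) n = f n"
proof -
  have inf: "infinite (range f)"
    using f strict_mono_imp_inj_on range_inj_infinite by blast
  show ?thesis
  proof (induction n)
    case 0
    show ?case unfolding enumerate_0
      by (rule Least_equality) (auto simp: f strict_mono_less_eq)
  next
    case (Suc n)
    show ?case unfolding enumerate_Suc''[OF inf] Suc
    proof (rule Least_equality)
      show "f (Suc n) \<in> range f \<and> f n < f (Suc n)" using f by (simp add: strict_mono_def)
      fix y assume "y \<in> range f \<and> f n < y"
      then obtain k where "y = f k" "f n < f k" by auto
      then show "f (Suc n) \<le> y" using f
        by (metis Suc_leI strict_mono_less strict_mono_less_eq)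
    qed
  qed
qed

lemma S_range:
  assumes "0 < r"
  shows "gasp_S K L r = range (\<lambda>i. K*L + gg K r i)"
proof
  show "gasp_S K L r \<subseteq> range (\<lambda>i. K*L + gg K r i)"
  proof
    fix x assume "x \<in> gasp_S K L r"
    then obtain j t where x: "x = K*L + j + K*t" "j < r" unfolding gasp_S_def by auto
    have "gg K r (t*r + j) = j + K*t" unfolding gg_def using x(2) assms by simp
    then show "x \<in> range (\<lambda>i. K*L + gg K r i)" using x by (metis add.assoc rangeI)
  qed
next
  show "range (\<lambda>i. K*L + gg K r i) \<subseteq> gasp_S K L r"
  proof
    fix x assume "x \<in> range (\<lambda>i. K*L + gg K r i)"
    then obtain i where "x = K*L + (i mod r) + K*(i div r)" unfolding gg_def by auto
    moreover have "i mod r < r" using assms by simp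
    ultimately show "x \<in> gasp_S K L r" unfolding gasp_S_def by blast
  qed
qed

lemma alpha_set:
  assumes "0 < r" "r \<le> K"
  shows "set (gasp_alpha K L T r) = {0..<K} \<union> (\<lambda>i. K*L + gg K r i) ` {..<T}"
proof -
  have "strict_mono (\<lambda>i. K*L + gg K r i)" using gg_mono[OF assms]
    by (simp add: strict_mono_def)
  then have "enumerate (gasp_S K L r) i = K*L + gg K r i" for i
    using S_range[OF assms(1)] enum_range by metis
  then show ?thesis unfolding gasp_alpha_def gasp_alpha_p_def gasp_alpha_s_def
    by auto
qed

lemma beta_set: "set (gasp_beta K L T) = (\<lambda>l. K*l) ` {..<L} \<union> {K*L..<K*L+T}"
  unfolding gasp_beta_def by auto


lemma sumsetI: "a \<in> A \<Longrightarrow> b \<in> B \<Longrightarrow> x = a + b \<Longrightarrow> x \<in> sumset A B"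
  unfolding sumset_def by blast

lemma gg_eval: "j < r \<Longrightarrow> gg K r (t*r + j) = j + K*t"
  unfolding gg_def by simp

lemma Dset:
  fixes K L T r :: nat
  assumes r0: "0<r" and rK: "r \<le> K" and rT: "r \<le> T" and L0: "0<L"
    and phi: "r + K*L + 1 \<le> T + 2*K"
  shows "sumset ({0..<K} \<union> (\<lambda>i. K*L + gg K r i) ` {..<T}) ((\<lambda>l. K*l) ` {..<L} \<union> {K*L..<K*L+T})
   = {x. x < 2*(K*L) \<and> x \<le> K*L+T+K-2} \<union> (\<lambda>y. 2*(K*L)+y) `
      {y. y < T + K*((T-1) div r) + (T-1) mod r \<and> \<not> ((y div K < (T-1) div r) \<and> r+T-1 \<le> y mod K)}"
  (is "sumset ?A ?B = ?L \<union> ?f ` ?G")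
proof -
  define c where "c = K*L"
  define Q where "Q = (T-1) div r"
  define R where "R = (T-1) mod r"
  have TQR: "T - 1 = Q*r + R" unfolding Q_def R_def by simp
  have Rr: "R < r" unfolding R_def using r0 by simp
  have T0: "0 < T" using r0 rT by simp
  have K0: "0 < K" using r0 rK by simp
  have ggT: "gg K r (T-1) = R + K*Q" using gg_eval[OF Rr, of K Q] TQR by simp
  have ggle: "gg K r i \<le> R + K*Q" if "i < T" for i
    using ggT strict_mono_less_eq[OF gg_mono[OF r0 rK], of i "T-1"] that by simp
  have ggmod: "gg K r i = i mod r + K*(i div r)" for i unfolding gg_def by simp
  have imr: "i mod r < r" for i using r0 by simp
  have cK: "K \<le> c" unfolding c_def using L0 by simp
  have lowp: "x \<in> ?L \<union> ?f ` ?G" if "x \<le> K*L+T+K-2" for x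
  proof (cases "x < 2*c")
    case True then show ?thesis using that c_def by simp
  next
    case False
    define y where "y = x - 2*c"
    have xy: "x = 2*c + y" using False y_def by simp
    have KKL: "K \<le> K*L" using L0 by simp
    have yT: "y + 2 \<le> T" using that KKL K0 False unfolding y_def c_def by linarith
    have "y mod K \<le> y" by simp
    then have "\<not> r+T-1 \<le> y mod K" using yT r0 by linarith
    then have "y \<in> ?G" using yT unfolding Q_def R_def by auto
    then show ?thesis using xy c_def by auto
  qed
  show ?thesis
  proof
    show "sumset ?A ?B \<subseteq> ?L \<union> ?f ` ?G"
    proof
      fix x assume "x \<in> sumset ?A ?B"
      then obtain a b where x: "x = a + b" "a \<in> ?A" "b \<in> ?B" unfolding sumset_def by blast
      show "x \<in> ?L \<union> ?f ` ?G"
      proof (cases "a < K")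
        case aK: True
        show ?thesis
        proof (cases "b < K*L")
          case True
          then obtain l where "b = K*l" "l < L" using x(3) by auto
          then have "b + K \<le> K*L" by (metis Suc_leI mult_Suc_right mult_le_mono2 add.commute)
          then show ?thesis using x(1) aK by (intro lowp) (simp add: c_def)
        next
          case False
          then have "b < K*L + T" using x(3) T0 K0 by auto
          then show ?thesis using x(1) aK False by (intro lowp) linarith
        qed
      next
        case aK: False
        then obtain i where i: "i < T" "a = c + gg K r i" using x(2) c_def by auto
        define j where "j = i mod r"
        define t where "t = i div r"
        have gi: "gg K r i = j + K*t" unfolding j_def t_def gg_def by simp
        have jr: "j < r" unfolding j_def using imr .
        show ?thesis
        proof (cases "b < K*L")
          case True
          then obtain l where l: "b = K*l" "l < L" using x(3) by auto
          have lK: "K*l + K \<le> c" unfolding c_def using l(2)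
            by (metis Suc_leI mult_Suc_right mult_le_mono2 add.commute)
          have xe: "x = c + j + K*(t+l)" using x(1) i(2) gi l(1) by (simp add: algebra_simps)
          show ?thesis
          proof (cases "K*(t+l) < c")
            case True
            then have "t + l < L" unfolding c_def by simp
            then have "K*(t+l) + K \<le> c" unfolding c_def
              by (metis Suc_leI mult_Suc_right mult_le_mono2 add.commute)
            then have "x \<le> K*L+T+K-2" using xe jr phi c_def by linarith
            moreover have "x < 2*(K*L)" using xe jr rK True c_def
              \<open>K*(t+l) + K \<le> c\<close> by linarith
            ultimately show ?thesis by simp
          next
            case False
            define y where "y = x - 2*c"
            have xy: "x = 2*c + y" unfolding y_def using xe False by simp
            have ye: "y = j + (K*(t+l) - c)" unfolding y_def using xe False by simp
            have "K*(t+l) - c = K*(t+l-L)" unfolding c_def by (simp add: diff_mult_distrib2)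
            then have "y mod K = j" using ye jr rK by simp
            then have nh: "\<not> r+T-1 \<le> y mod K" using jr T0 by simp
            have "y + K \<le> gg K r i" using ye gi lK False by (simp add: algebra_simps)
            then have "y < T + K*Q + R" using ggle[OF i(1)] T0 by simp
            then have "y \<in> ?G" using nh Q_def R_def by simp
            then show ?thesis using xy c_def by auto
          qed
        next
          case False
          then have "c \<le> b" "b < c + T" using x(3) c_def T0 K0 by auto
          then obtain u where u: "b = c + u" "u < T"
            by (metis le_add_diff_inverse nat_add_left_cancel_less)
          define y where "y = gg K r i + u"
          have xy: "x = 2*c + y" unfolding y_def using x(1) i(2) u(1) by simp
          have "y < T + K*Q + R" unfolding y_def using ggle[OF i(1)] u(2) by simp
          moreover have "y mod K \<le> j + u"
          proof -
            have "y = (j+u) + K*t" unfolding y_def gi by simp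
            then have "y mod K = (j+u) mod K" by simp
            then show ?thesis by simp
          qed
          then have "\<not> r+T-1 \<le> y mod K" using jr u(2) by linarith
          ultimately have "y \<in> ?G" using Q_def R_def by simp
          then show ?thesis using xy c_def by auto
        qed
      qed
    qed
  next
    show "?L \<union> ?f ` ?G \<subseteq> sumset ?A ?B"
    proof
      fix x assume "x \<in> ?L \<union> ?f ` ?G"
      then consider (l) "x \<in> ?L" | (g) y where "y \<in> ?G" "x = 2*c + y" using c_def by auto
      then show "x \<in> sumset ?A ?B"
      proof cases
        case l
        show ?thesis
        proof (cases "x < c")
          case True
          then have "x div K < L" unfolding c_def
            by (simp add: less_mult_imp_div_less mult.commute)
          then have bB: "K * (x div K) \<in> ?B" by auto
          have aA: "x mod K \<in> ?A" using K0 by simp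
          show ?thesis by (rule sumsetI[OF aA bB]) simp
        next
          case False
          show ?thesis
          proof (cases "x < c + T")
            case True
            have a0: "0 \<in> ?A" using K0 by simp
            have bx: "x \<in> ?B" using True False c_def by auto
            show ?thesis by (rule sumsetI[OF a0 bx]) simp
          next
            case False2: False
            have "x \<le> K*L+T+K-2" using l by auto
            then have "x - c - (T-1) < K" using c_def K0 T0 by linarith
            then have "x - c - (T-1) \<in> ?A" by simp
            moreover have "c + (T-1) \<in> ?B" using T0 c_def by auto
            ultimately show ?thesis by (rule sumsetI) (use False2 in simp)
          qed
        qed
      next
        case g
        define t where "t = y div K"
        define z where "z = y mod K"
        have yd: "y = z + K*t" unfolding t_def z_def by simp
        have yM: "y < T + K*Q + R" and nh: "\<not> (t < Q \<and> r+T-1 \<le> z)"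
          using g(1) unfolding t_def z_def Q_def R_def by auto
        have cB: "c + u \<in> ?B" if "u < T" for u using that c_def by auto
        have gA: "c + gg K r i \<in> ?A" if "i < T" for i using that c_def by auto
        show ?thesis
        proof (cases "t < Q")
          case tQ: True
          have tr: "t*r + r \<le> T - 1"
          proof -
            have "Suc t \<le> Q" using tQ by simp
            then have "Suc t * r \<le> Q * r" by (rule mult_le_mono1)
            then show ?thesis using TQR by simp
          qed
          show ?thesis
          proof (cases "z < r")
            case True
            have "t*r + z < T" using tr True by linarith
            then have "c + gg K r (t*r+z) \<in> ?A" by (rule gA)
            moreover have "c + 0 \<in> ?B" using T0 by (rule cB)
            ultimately show ?thesis by (rule sumsetI) (simp add: gg_eval[OF True] g(2) yd)
          next
            case False
            have "r - 1 < r" using r0 by simp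
            have "t*r + (r-1) < T" using tr r0 by linarith
            then have "c + gg K r (t*r+(r-1)) \<in> ?A" by (rule gA)
            moreover have "z - (r-1) < T" using nh tQ r0 T0 by linarith
            then have "c + (z - (r-1)) \<in> ?B" by (rule cB)
            ultimately show ?thesis
            proof (rule sumsetI)
              have "gg K r (t*r+(r-1)) = (r-1) + K*t" using \<open>r - 1 < r\<close> by (rule gg_eval)
              then show "x = c + gg K r (t * r + (r - 1)) + (c + (z - (r - 1)))"
                using False g(2) yd by simp
            qed
          qed
        next
          case tQ: False
          then have "K*Q \<le> K*t" by simp
          then have yKQ: "K*Q \<le> y" using yd by linarith
          show ?thesis
          proof (cases "R + K*Q \<le> y")
            case True
            have "T - 1 < T" using T0 by simp
            then have "c + gg K r (T-1) \<in> ?A" by (rule gA)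
            moreover have "y - (R + K*Q) < T" using yM T0 by linarith
            then have "c + (y - (R + K*Q)) \<in> ?B" by (rule cB)
            ultimately show ?thesis
            proof (rule sumsetI)
              show "x = c + gg K r (T - 1) + (c + (y - (R + K * Q)))"
                unfolding ggT using True g(2) by linarith
            qed
          next
            case False
            define z' where "z' = y - K*Q"
            have z'R: "z' < R" using False yKQ unfolding z'_def by linarith
            then have z'r: "z' < r" using Rr by simp
            have "Q*r + z' < T" using z'R TQR T0 by linarith
            then have "c + gg K r (Q*r+z') \<in> ?A" by (rule gA)
            moreover have "c + 0 \<in> ?B" using T0 by (rule cB)
            ultimately show ?thesis
            proof (rule sumsetI)
              show "x = c + gg K r (Q*r+z') + (c + 0)"
                unfolding gg_eval[OF z'r] using yKQ g(2) z'_def by linarith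
            qed
          qed
        qed
      qed
    qed
  qed
qed


lemma card_holes:
  fixes K Q a :: nat
  assumes K0: "0 < K"
  shows "card {y. y div K < Q \<and> a \<le> y mod K} = Q * (K - a)"
proof -
  have eq: "{y. y div K < Q \<and> a \<le> y mod K} = (\<lambda>(t,j). K*t+j) ` ({..<Q} \<times> {a..<K})"
  proof
    show "{y. y div K < Q \<and> a \<le> y mod K} \<subseteq> (\<lambda>(t,j). K*t+j) ` ({..<Q} \<times> {a..<K})"
    proof
      fix y assume y: "y \<in> {y. y div K < Q \<and> a \<le> y mod K}"
      have "y = (\<lambda>(t,j). K*t+j) (y div K, y mod K)" by simp
      moreover have "(y div K, y mod K) \<in> {..<Q} \<times> {a..<K}" using y K0 by simp
      ultimately show "y \<in> (\<lambda>(t,j). K*t+j) ` ({..<Q} \<times> {a..<K})" by blast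
    qed
  next
    show "(\<lambda>(t,j). K*t+j) ` ({..<Q} \<times> {a..<K}) \<subseteq> {y. y div K < Q \<and> a \<le> y mod K}"
      by auto
  qed
  have inj: "inj_on (\<lambda>(t,j). K*t+j) ({..<Q} \<times> {a..<K})"
  proof (rule inj_onI)
    fix p q assume p: "p \<in> {..<Q} \<times> {a..<K}" and q: "q \<in> {..<Q} \<times> {a..<K}"
      and e: "(\<lambda>(t,j). K*t+j) p = (\<lambda>(t,j). K*t+j) q"
    obtain t1 j1 where p1: "p = (t1,j1)" "j1 < K" using p by auto
    obtain t2 j2 where q1: "q = (t2,j2)" "j2 < K" using q by auto
    have e': "K*t1+j1 = K*t2+j2" using e p1 q1 by simp
    have "(K*t1+j1) mod K = j1" "(K*t2+j2) mod K = j2" using p1 q1 by simp_all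
    then have "j1 = j2" using e' by simp
    moreover have "t1 = t2" using e' \<open>j1 = j2\<close> K0 by simp
    ultimately show "p = q" using p1 q1 by simp
  qed
  show ?thesis unfolding eq card_image[OF inj] by simp
qed

lemma card_char:
  fixes K c P M Q a :: nat
  assumes K0: "0 < K" and KQM: "K*Q \<le> M"
  shows "card ({x. x < 2*c \<and> x \<le> P} \<union> (\<lambda>y. 2*c+y) ` {y. y < M \<and> \<not> (y div K < Q \<and> a \<le> y mod K)})
     = min (2*c) (P+1) + (M - Q*(K - a))"
proof -
  let ?H = "{y. y div K < Q \<and> a \<le> y mod K}"
  let ?G = "{y. y < M \<and> \<not> (y div K < Q \<and> a \<le> y mod K)}"
  have l: "{x. x < 2*c \<and> x \<le> P} = {..<min (2*c) (P+1)}" by auto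
  have HM: "?H \<subseteq> {..<M}"
  proof
    fix y assume "y \<in> ?H"
    then have "y div K < Q" by simp
    then have "y < K*Q" using K0
      by (metis div_less_iff_less_mult mult.commute)
    then show "y \<in> {..<M}" using KQM by simp
  qed
  have G: "?G = {..<M} - ?H" by auto
  have cG: "card ?G = M - Q*(K-a)"
  proof -
    have "card ?G = card {..<M} - card ?H"
      unfolding G by (rule card_Diff_subset[OF finite_subset[OF HM] HM]) simp
    then show ?thesis using card_holes[OF K0, of Q a] by simp
  qed
  have fin: "finite ?G" using G by simp
  have disj: "{x. x < 2*c \<and> x \<le> P} \<inter> (\<lambda>y. 2*c+y) ` ?G = {}" by auto
  have "card ({x. x < 2*c \<and> x \<le> P} \<union> (\<lambda>y. 2*c+y) ` ?G) = card {x. x < 2*c \<and> x \<le> P} + card ((\<lambda>y. 2*c+y) ` ?G)"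
    by (rule card_Un_disjoint) (use fin disj l in auto)
  also have "card ((\<lambda>y. 2*c+y) ` ?G) = card ?G" by (rule card_image) (simp add: inj_on_def)
  finally show ?thesis using l cG by simp
qed


lemma F_form:
  fixes K T r :: nat
  assumes r0: "0 < r" and rK: "r \<le> K" and T0: "0 < T"
  shows "T + K*((T-1) div r) + (T-1) mod r - ((T-1) div r)*(K - (r+T-1))
         = T + (T-1) + ((T-1) div r) * min (T-1) (K-r)"
proof -
  define Q where "Q = (T-1) div r"
  define R where "R = (T-1) mod r"
  have TQR: "T - 1 = Q*r + R" unfolding Q_def R_def by simp
  have QK: "K*Q = Q*(K-r) + Q*r" using rK
    by (metis add.commute le_add_diff_inverse mult.commute distrib_left)
  show ?thesis unfolding Q_def[symmetric] R_def[symmetric]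
  proof (cases "r + T - 1 \<le> K")
    case True
    then have m: "min (T-1) (K-r) = T-1" by simp
    have e: "K - (r+T-1) = (K-r) - (T-1)" using T0 by simp
    have "Q*(K - (r+T-1)) = Q*(K-r) - Q*(T-1)" unfolding e by (rule diff_mult_distrib2)
    moreover have "T-1 \<le> K-r" using True T0 by simp
    then have "Q*(T-1) \<le> Q*(K-r)" by simp
    ultimately show "T + K*Q + R - Q*(K - (r+T-1)) = T + (T-1) + Q * min (T-1) (K-r)"
      unfolding m using QK TQR by linarith
  next
    case False
    then have m: "min (T-1) (K-r) = K-r" by simp
    have "K - (r+T-1) = 0" using False by simp
    then show "T + K*Q + R - Q*(K - (r+T-1)) = T + (T-1) + Q * min (T-1) (K-r)"
      unfolding m using QK TQR by simp
  qed
qed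

lemma F_mono:
  fixes K T r m :: nat
  assumes r0: "0 < r" and rm: "r \<le> m" and mK: "m \<le> K" and T0: "0 < T"
  shows "T + K*((T-1) div m) + (T-1) mod m - ((T-1) div m)*(K - (m+T-1))
       \<le> T + K*((T-1) div r) + (T-1) mod r - ((T-1) div r)*(K - (r+T-1))"
proof -
  have "(T-1) div m \<le> (T-1) div r" using r0 rm by (rule div_le_mono2)
  moreover have "min (T-1) (K-m) \<le> min (T-1) (K-r)" using rm by simp
  ultimately have "((T-1) div m) * min (T-1) (K-m) \<le> ((T-1) div r) * min (T-1) (K-r)"
    by (rule mult_le_mono)
  moreover have "0 < m" using r0 rm by simp
  note e1 = F_form[OF this mK T0]
  note e2 = F_form[OF r0 order.trans[OF rm mK] T0]
  ultimately show ?thesis unfolding e1 e2 by simp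
qed

lemma N_formula:
  fixes K L T r :: nat
  assumes r0: "0<r" and rK: "r \<le> K" and rT: "r \<le> T" and L0: "0<L"
    and phi: "r + K*L + 1 \<le> T + 2*K"
  shows "gasp_N K L T r = min (2*(K*L)) (K*L+T+K-2+1) +
     (T + K*((T-1) div r) + (T-1) mod r - ((T-1) div r)*(K - (r+T-1)))"
proof -
  have K0: "0 < K" using r0 rK by simp
  have "K*((T-1) div r) \<le> T + K*((T-1) div r) + (T-1) mod r" by simp
  note cc = card_char[OF K0 this, of "K*L" "K*L+T+K-2" "r+T-1"]
  show ?thesis
    unfolding gasp_N_def alpha_set[OF r0 rK] beta_set Dset[OF assms] cc ..
qed

theorem lemma2:
  fixes K L T :: nat and \<phi> :: int
  assumes "0 < K" and "0 < L" and "0 < T" and "L \<le> K"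
    and "\<phi> = int T - 1 - int K * int L + 2 * int K"
    and "\<phi> \<ge> 1"
  shows "\<forall>r::nat. 1 \<le> r \<and> r \<le> min K (min T (nat \<phi>)) \<longrightarrow>
           gasp_N K L T (min K (min T (nat \<phi>))) \<le> gasp_N K L T r"
proof (intro allI impI)
  fix r :: nat
  assume r: "1 \<le> r \<and> r \<le> min K (min T (nat \<phi>))"
  define m where "m = min K (min T (nat \<phi>))"
  have rm: "r \<le> m" and r0: "0 < r" using r m_def by auto
  have cond: "s + K*L + 1 \<le> T + 2*K" if "s \<le> nat \<phi>" for s
  proof -
    have "int s \<le> \<phi>" using that assms(6) by linarith
    then have "int (s + K*L + 1) \<le> int (T + 2*K)" using assms(5) by simp
    then show ?thesis by linarith
  qed
  have m0: "0 < m" using r0 rm by simp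
  have mK: "m \<le> K" and mT: "m \<le> T" and mp: "m \<le> nat \<phi>" unfolding m_def by auto
  have rK: "r \<le> K" and rT: "r \<le> T" and rp: "r \<le> nat \<phi>" using rm mK mT mp by auto
  show "gasp_N K L T m \<le> gasp_N K L T r"
    unfolding N_formula[OF m0 mK mT assms(2) cond[OF mp]] N_formula[OF r0 rK rT assms(2) cond[OF rp]]
    using F_mono[OF r0 rm mK assms(3)] by simp
qed

end
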